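(* Let $G_1$ and $G_2$ be finite groups each satisfying: for all $x,y$, $x^2=1$ or $y^2=1$ or $xy=yx$. Suppose that every abelian section of $G_2$ is isomorphic to a section of $G_1$, and that $G_1$ is nonabelian. Then $G_2$ is isomorphic to a section of $G_1$.
   Context: A section of a group is a quotient of one of its subgroups. *)

theory Defs
  imports "HOL-Algebra.Algebra"
begin

definition iso_to_section :: "('b, 'd) monoid_scheme \<Rightarrow> ('a, 'c) monoid_scheme \<Rightarrow> bool" where
  "iso_to_section S G \<longleftrightarrow>
     (\<exists>H N. subgroup H G \<and> normal N (G\<lparr>carrier := H\<rparr>) \<and> S \<cong> (G\<lparr>carrier := H\<rparr>) Mod N)"

definition sq_cond :: "('a, 'c) monoid_scheme \<Rightarrow> bool" where
  "sq_cond G \<longleftrightarrow> (\<forall>x\<in>carrier G. \<forall>y\<in>carrier G.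
      x \<otimes>\<^bsub>G\<^esub> x = \<one>\<^bsub>G\<^esub> \<or> y \<otimes>\<^bsub>G\<^esub> y = \<one>\<^bsub>G\<^esub> \<or> x \<otimes>\<^bsub>G\<^esub> y = y \<otimes>\<^bsub>G\<^esub> x)"

end

theory Submission
  imports Defs
begin


lemma dih_struct:
  fixes G :: "('a, 'b) monoid_scheme" (structure)
  assumes grp: "group G" and sq: "sq_cond G" and nc: "\<not> comm_group G"
  obtains A where "subgroup A G" "\<forall>a\<in>A. \<forall>b\<in>A. a \<otimes>\<^bsub>G\<^esub> b = b \<otimes>\<^bsub>G\<^esub> a"
    "\<exists>x\<in>A. x \<otimes>\<^bsub>G\<^esub> x \<noteq> \<one>\<^bsub>G\<^esub>"
    "\<forall>x\<in>carrier G - A. x \<otimes>\<^bsub>G\<^esub> x = \<one>\<^bsub>G\<^esub>"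
    "\<forall>x\<in>carrier G - A. \<forall>a\<in>A. x \<otimes>\<^bsub>G\<^esub> a \<otimes>\<^bsub>G\<^esub> x = inv\<^bsub>G\<^esub> a"
    "\<forall>x\<in>carrier G - A. \<forall>y\<in>carrier G - A. x \<otimes>\<^bsub>G\<^esub> y \<in> A"
    "carrier G - A \<noteq> {}"
proof -
  interpret group G by (rule grp)
  define XX where "XX = {x \<in> carrier G. x \<otimes> x \<noteq> \<one>}"
  define A where "A = {g \<in> carrier G. \<forall>x\<in>XX. g \<otimes> x = x \<otimes> g}"
  have sqc: "\<And>x y. x \<in> carrier G \<Longrightarrow> y \<in> carrier G \<Longrightarrow> x \<otimes> x = \<one> \<or> y \<otimes> y = \<one> \<or> x \<otimes> y = y \<otimes> x"
    using sq unfolding sq_cond_def by blast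
  obtain x0 y0 where x0: "x0 \<in> carrier G" "y0 \<in> carrier G" "x0 \<otimes> y0 \<noteq> y0 \<otimes> x0"
    using nc group_comm_groupI by blast
  have "XX \<noteq> {}"
  proof
    assume "XX = {}"
    then have inv1: "\<And>x. x \<in> carrier G \<Longrightarrow> x \<otimes> x = \<one>" unfolding XX_def by auto
    have invx: "\<And>x. x \<in> carrier G \<Longrightarrow> inv x = x"
      using inv1 inv_equality by blast
    have "x0 \<otimes> y0 = inv (x0 \<otimes> y0)" using invx[of "x0 \<otimes> y0"] x0 by simp
    also have "\<dots> = inv y0 \<otimes> inv x0" using x0 by (simp add: inv_mult_group)
    also have "\<dots> = y0 \<otimes> x0" using invx x0 by simp
    finally have "x0 \<otimes> y0 = y0 \<otimes> x0" .
    then show False using x0 by blast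
  qed
  then obtain x1 where x1: "x1 \<in> XX" by blast
  have XXA: "XX \<subseteq> A" unfolding A_def XX_def using sqc by auto
  have Asub: "A \<subseteq> carrier G" unfolding A_def by auto
  have subA: "subgroup A G"
  proof (rule subgroupI)
    show "A \<subseteq> carrier G" by (rule Asub)
    show "A \<noteq> {}" using XXA x1 by auto
    fix a assume a: "a \<in> A"
    show "inv a \<in> A" unfolding A_def
    proof (safe)
      show "inv a \<in> carrier G" using a Asub by auto
      fix x assume x: "x \<in> XX"
      have xc: "x \<in> carrier G" using x XX_def by auto
      have ac: "a \<in> carrier G" using a Asub by auto
      have "a \<otimes> x = x \<otimes> a" using a x A_def by auto
      then have "inv a \<otimes> (a \<otimes> x) \<otimes> inv a = inv a \<otimes> (x \<otimes> a) \<otimes> inv a" by simp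
      then have e: "x = inv a \<otimes> x \<otimes> a"
        using ac xc by (simp add: m_assoc[symmetric])
      have "x \<otimes> inv a = (inv a \<otimes> x \<otimes> a) \<otimes> inv a"
        using e by (rule arg_cong[where f="\<lambda>y. y \<otimes> inv a"])
      also have "\<dots> = inv a \<otimes> x" using ac xc by (simp add: m_assoc)
      finally show "inv a \<otimes> x = x \<otimes> inv a" by simp
    qed
  next
    fix a b assume a: "a \<in> A" and b: "b \<in> A"
    show "a \<otimes> b \<in> A" unfolding A_def
    proof (safe)
      show "a \<otimes> b \<in> carrier G" using a b Asub by auto
      fix x assume x: "x \<in> XX"
      have xc: "x \<in> carrier G" using x XX_def by auto
      have ac: "a \<in> carrier G" "b \<in> carrier G" using a b Asub by auto
      have "a \<otimes> x = x \<otimes> a" "b \<otimes> x = x \<otimes> b" using a b x A_def by auto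
      then show "a \<otimes> b \<otimes> x = x \<otimes> (a \<otimes> b)"
        using ac xc by (metis m_assoc)
    qed
  qed
  have comm: "\<forall>a\<in>A. \<forall>b\<in>A. a \<otimes> b = b \<otimes> a"
  proof (intro ballI)
    fix a b assume a: "a \<in> A" and b: "b \<in> A"
    have ac: "a \<in> carrier G" "b \<in> carrier G" using a b Asub by auto
    show "a \<otimes> b = b \<otimes> a"
    proof (cases "a \<in> XX \<or> b \<in> XX")
      case True then show ?thesis using a b unfolding A_def by auto
    next
      case False
      then have aa: "a \<otimes> a = \<one>" using ac XX_def by auto
      have x1c: "x1 \<in> carrier G" using x1 XX_def by auto
      have ax: "a \<otimes> x1 = x1 \<otimes> a" using a x1 A_def by auto
      have "(a \<otimes> x1) \<otimes> (a \<otimes> x1) = x1 \<otimes> x1"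
      proof -
        have "(a \<otimes> x1) \<otimes> (a \<otimes> x1) = a \<otimes> (x1 \<otimes> a) \<otimes> x1" using ac x1c by (simp add: m_assoc)
        also have "\<dots> = (a \<otimes> a) \<otimes> x1 \<otimes> x1" using ax ac x1c by (simp add: m_assoc)
        finally show ?thesis using aa x1c by simp
      qed
      then have "a \<otimes> x1 \<in> XX" using x1 ac x1c XX_def by auto
      then have "b \<otimes> (a \<otimes> x1) = (a \<otimes> x1) \<otimes> b" using b A_def by auto
      moreover have "b \<otimes> x1 = x1 \<otimes> b" using b x1 A_def by auto
      ultimately have "(b \<otimes> a) \<otimes> x1 = (a \<otimes> b) \<otimes> x1"
        using ac x1c by (simp add: m_assoc)
      then show ?thesis using ac x1c r_cancel by simp
    qed
  qed
  have invol: "\<forall>g\<in>carrier G - A. g \<otimes> g = \<one>"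
  proof
    fix g assume g: "g \<in> carrier G - A"
    then obtain x where x: "x \<in> XX" "g \<otimes> x \<noteq> x \<otimes> g" unfolding A_def by auto
    then show "g \<otimes> g = \<one>" using sqc[of g x] g XX_def by auto
  qed
  have invert: "\<forall>g\<in>carrier G - A. \<forall>a\<in>A. g \<otimes> a \<otimes> g = inv a"
  proof (intro ballI)
    fix g a assume g: "g \<in> carrier G - A" and a: "a \<in> A"
    have ac: "a \<in> carrier G" using a Asub by auto
    have "g \<otimes> a \<notin> A"
    proof
      assume "g \<otimes> a \<in> A"
      then have "g \<otimes> a \<otimes> inv a \<in> A" using a subA by (simp add: subgroup.m_closed subgroup.m_inv_closed)
      then show False using g ac by (simp add: m_assoc)
    qed
    then have "(g \<otimes> a) \<otimes> (g \<otimes> a) = \<one>" using invol g ac by auto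
    then show "g \<otimes> a \<otimes> g = inv a" using g ac
      using inv_equality[of "g \<otimes> a \<otimes> g" a] by (simp add: m_assoc)
  qed
  have prod: "\<forall>g\<in>carrier G - A. \<forall>h\<in>carrier G - A. g \<otimes> h \<in> A"
  proof (intro ballI)
    fix g h assume g: "g \<in> carrier G - A" and h: "h \<in> carrier G - A"
    have gc: "g \<in> carrier G" "h \<in> carrier G" using g h by auto
    have gg: "g \<otimes> g = \<one>" "h \<otimes> h = \<one>" using g h invol by auto
    show "g \<otimes> h \<in> A" unfolding A_def
    proof (safe)
      show "g \<otimes> h \<in> carrier G" using gc by auto
      fix x assume x: "x \<in> XX"
      have xA: "x \<in> A" "inv x \<in> A" using x XXA subA by (auto intro: subgroup.m_inv_closed)
      have xc: "x \<in> carrier G" using x XX_def by auto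
      have 1: "h \<otimes> x \<otimes> h = inv x" using invert h xA by auto
      have 2: "g \<otimes> inv x \<otimes> g = x" using invert g xA xc by auto
      have "g \<otimes> h \<otimes> x = g \<otimes> (h \<otimes> x \<otimes> h) \<otimes> h" using gc xc gg by (simp add: m_assoc)
      also have "\<dots> = g \<otimes> inv x \<otimes> g \<otimes> g \<otimes> h" using 1 gc xc gg by (simp add: m_assoc)
      also have "\<dots> = x \<otimes> (g \<otimes> h)" using 2 gc xc gg by (simp add: m_assoc)
      finally show "g \<otimes> h \<otimes> x = x \<otimes> (g \<otimes> h)" .
    qed
  qed
  have ne: "carrier G - A \<noteq> {}"
  proof
    assume "carrier G - A = {}"
    then have "carrier G \<subseteq> A" by auto
    then show False using x0 comm by auto
  qed
  show ?thesis
    apply (rule that[OF subA comm _ invol invert prod ne])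
    using x1 XXA XX_def by auto
qed



lemma dih_iso:
  fixes G :: "('a, 'b) monoid_scheme" and Q :: "('c, 'd) monoid_scheme"
  assumes grp: "group G" and grpQ: "group Q"
    and subA: "subgroup A G" and s: "s \<in> carrier G" "s \<notin> A"
    and invol: "\<forall>x\<in>carrier G - A. x \<otimes>\<^bsub>G\<^esub> x = \<one>\<^bsub>G\<^esub>"
    and invert: "\<forall>x\<in>carrier G - A. \<forall>a\<in>A. x \<otimes>\<^bsub>G\<^esub> a \<otimes>\<^bsub>G\<^esub> x = inv\<^bsub>G\<^esub> a"
    and prod: "\<forall>x\<in>carrier G - A. \<forall>y\<in>carrier G - A. x \<otimes>\<^bsub>G\<^esub> y \<in> A"
    and F: "F \<in> carrier Q" "F \<otimes>\<^bsub>Q\<^esub> F = \<one>\<^bsub>Q\<^esub>"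
    and phi_c: "\<forall>a\<in>A. \<phi> a \<in> carrier Q"
    and phi_m: "\<forall>a\<in>A. \<forall>b\<in>A. \<phi> (a \<otimes>\<^bsub>G\<^esub> b) = \<phi> a \<otimes>\<^bsub>Q\<^esub> \<phi> b"
    and phi_inj: "inj_on \<phi> A"
    and phi_F: "\<forall>a\<in>A. F \<otimes>\<^bsub>Q\<^esub> \<phi> a = \<phi> (inv\<^bsub>G\<^esub> a) \<otimes>\<^bsub>Q\<^esub> F"
    and F_not: "F \<notin> \<phi> ` A"
    and surj: "carrier Q \<subseteq> \<phi> ` A \<union> (\<lambda>p. F \<otimes>\<^bsub>Q\<^esub> p) ` \<phi> ` A"
  shows "G \<cong> Q"
proof -
  interpret G: group G by (rule grp)
  interpret Q: group Q by (rule grpQ)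
  have Asub: "A \<subseteq> carrier G" by (rule subgroup.subset[OF subA])
  have Ainv: "\<And>a. a \<in> A \<Longrightarrow> inv\<^bsub>G\<^esub> a \<in> A" by (rule subgroup.m_inv_closed[OF subA])
  have Amul: "\<And>a b. a \<in> A \<Longrightarrow> b \<in> A \<Longrightarrow> a \<otimes>\<^bsub>G\<^esub> b \<in> A" by (rule subgroup.m_closed[OF subA])
  have A1: "\<one>\<^bsub>G\<^esub> \<in> A" by (rule subgroup.one_closed[OF subA])
  have ss: "s \<otimes>\<^bsub>G\<^esub> s = \<one>\<^bsub>G\<^esub>" using invol s by auto
  have sx: "\<And>x. x \<in> carrier G \<Longrightarrow> x \<notin> A \<Longrightarrow> s \<otimes>\<^bsub>G\<^esub> x \<in> A" using prod s by auto
  have mulA1: "\<And>a y. a \<in> A \<Longrightarrow> y \<in> carrier G \<Longrightarrow> a \<otimes>\<^bsub>G\<^esub> y \<in> A \<Longrightarrow> y \<in> A"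
  proof -
    fix a y assume a: "a \<in> A" and y: "y \<in> carrier G" and ay: "a \<otimes>\<^bsub>G\<^esub> y \<in> A"
    have "inv\<^bsub>G\<^esub> a \<otimes>\<^bsub>G\<^esub> (a \<otimes>\<^bsub>G\<^esub> y) \<in> A" using Amul Ainv a ay by blast
    moreover have "a \<in> carrier G" using a Asub by blast
    ultimately show "y \<in> A" using y by (simp add: G.m_assoc[symmetric])
  qed
  have mulA2: "\<And>a y. a \<in> A \<Longrightarrow> y \<in> carrier G \<Longrightarrow> y \<otimes>\<^bsub>G\<^esub> a \<in> A \<Longrightarrow> y \<in> A"
  proof -
    fix a y assume a: "a \<in> A" and y: "y \<in> carrier G" and ay: "y \<otimes>\<^bsub>G\<^esub> a \<in> A"
    have "(y \<otimes>\<^bsub>G\<^esub> a) \<otimes>\<^bsub>G\<^esub> inv\<^bsub>G\<^esub> a \<in> A" using Amul Ainv a ay by blast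
    moreover have "a \<in> carrier G" using a Asub by blast
    ultimately show "y \<in> A" using y by (simp add: G.m_assoc)
  qed
  have phi1: "\<phi> \<one>\<^bsub>G\<^esub> = \<one>\<^bsub>Q\<^esub>"
  proof -
    have "\<phi> (\<one>\<^bsub>G\<^esub> \<otimes>\<^bsub>G\<^esub> \<one>\<^bsub>G\<^esub>) = \<phi> \<one>\<^bsub>G\<^esub> \<otimes>\<^bsub>Q\<^esub> \<phi> \<one>\<^bsub>G\<^esub>"
      using phi_m A1 by blast
    then have "\<phi> \<one>\<^bsub>G\<^esub> = \<phi> \<one>\<^bsub>G\<^esub> \<otimes>\<^bsub>Q\<^esub> \<phi> \<one>\<^bsub>G\<^esub>"
      by (simp only: G.l_one[OF G.one_closed])
    moreover have c1: "\<phi> \<one>\<^bsub>G\<^esub> \<in> carrier Q" using phi_c A1 by blast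
    ultimately show ?thesis using Q.l_cancel_one'[OF c1 c1] by blast
  qed
  have phi_inv: "\<And>a. a \<in> A \<Longrightarrow> \<phi> (inv\<^bsub>G\<^esub> a) = inv\<^bsub>Q\<^esub> \<phi> a"
  proof -
    fix a assume a: "a \<in> A"
    have ac: "a \<in> carrier G" using a Asub by auto
    have e1: "\<phi> (inv\<^bsub>G\<^esub> a \<otimes>\<^bsub>G\<^esub> a) = \<phi> (inv\<^bsub>G\<^esub> a) \<otimes>\<^bsub>Q\<^esub> \<phi> a"
      using phi_m a Ainv by blast
    have e2: "inv\<^bsub>G\<^esub> a \<otimes>\<^bsub>G\<^esub> a = \<one>\<^bsub>G\<^esub>" using ac by simp
    have "\<phi> (inv\<^bsub>G\<^esub> a) \<otimes>\<^bsub>Q\<^esub> \<phi> a = \<phi> (inv\<^bsub>G\<^esub> a \<otimes>\<^bsub>G\<^esub> a)" using e1 by (rule sym)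
    also have "\<dots> = \<phi> \<one>\<^bsub>G\<^esub>" using e2 by (rule arg_cong)
    also have "\<dots> = \<one>\<^bsub>Q\<^esub>" by (rule phi1)
    finally have "\<phi> (inv\<^bsub>G\<^esub> a) \<otimes>\<^bsub>Q\<^esub> \<phi> a = \<one>\<^bsub>Q\<^esub>" .
    then show "\<phi> (inv\<^bsub>G\<^esub> a) = inv\<^bsub>Q\<^esub> \<phi> a"
      using Q.inv_equality[of "\<phi> (inv\<^bsub>G\<^esub> a)" "\<phi> a"] phi_c a Ainv by auto
  qed
  define f where "f x = (if x \<in> A then \<phi> x else F \<otimes>\<^bsub>Q\<^esub> \<phi> (s \<otimes>\<^bsub>G\<^esub> x))" for x
  have fc: "f x \<in> carrier Q" if "x \<in> carrier G" for x
    using that phi_c sx F unfolding f_def by auto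
  have fm: "f (x \<otimes>\<^bsub>G\<^esub> y) = f x \<otimes>\<^bsub>Q\<^esub> f y" if x: "x \<in> carrier G" and y: "y \<in> carrier G" for x y
  proof (cases "x \<in> A")
    case xA: True
    show ?thesis
    proof (cases "y \<in> A")
      case True
      then show ?thesis using xA Amul phi_m unfolding f_def by auto
    next
      case yA: False
      have xyA: "x \<otimes>\<^bsub>G\<^esub> y \<notin> A" using mulA1 xA y yA by blast
      have sxs: "s \<otimes>\<^bsub>G\<^esub> x \<otimes>\<^bsub>G\<^esub> s = inv\<^bsub>G\<^esub> x" using invert s xA by auto
      have "s \<otimes>\<^bsub>G\<^esub> (x \<otimes>\<^bsub>G\<^esub> y) = s \<otimes>\<^bsub>G\<^esub> x \<otimes>\<^bsub>G\<^esub> (s \<otimes>\<^bsub>G\<^esub> s) \<otimes>\<^bsub>G\<^esub> y"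
        using s x y ss by (simp add: G.m_assoc)
      also have "\<dots> = (s \<otimes>\<^bsub>G\<^esub> x \<otimes>\<^bsub>G\<^esub> s) \<otimes>\<^bsub>G\<^esub> (s \<otimes>\<^bsub>G\<^esub> y)"
        using s x y by (simp add: G.m_assoc)
      also have "\<dots> = inv\<^bsub>G\<^esub> x \<otimes>\<^bsub>G\<^esub> (s \<otimes>\<^bsub>G\<^esub> y)" using sxs by simp
      finally have e: "s \<otimes>\<^bsub>G\<^esub> (x \<otimes>\<^bsub>G\<^esub> y) = inv\<^bsub>G\<^esub> x \<otimes>\<^bsub>G\<^esub> (s \<otimes>\<^bsub>G\<^esub> y)" .
      have syA: "s \<otimes>\<^bsub>G\<^esub> y \<in> A" using sx y yA by blast
      have "f (x \<otimes>\<^bsub>G\<^esub> y) = F \<otimes>\<^bsub>Q\<^esub> (\<phi> (inv\<^bsub>G\<^esub> x) \<otimes>\<^bsub>Q\<^esub> \<phi> (s \<otimes>\<^bsub>G\<^esub> y))"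
        using xyA e phi_m Ainv xA syA unfolding f_def by auto
      also have "\<dots> = (F \<otimes>\<^bsub>Q\<^esub> \<phi> (inv\<^bsub>G\<^esub> x)) \<otimes>\<^bsub>Q\<^esub> \<phi> (s \<otimes>\<^bsub>G\<^esub> y)"
        using F phi_c Ainv xA syA by (simp add: Q.m_assoc)
      also have "\<dots> = (\<phi> x \<otimes>\<^bsub>Q\<^esub> F) \<otimes>\<^bsub>Q\<^esub> \<phi> (s \<otimes>\<^bsub>G\<^esub> y)"
        using phi_F Ainv xA Asub by auto
      also have "\<dots> = f x \<otimes>\<^bsub>Q\<^esub> f y"
        using F phi_c xA syA yA unfolding f_def by (simp add: Q.m_assoc)
      finally show ?thesis .
    qed
  next
    case xA: False
    have sxA: "s \<otimes>\<^bsub>G\<^esub> x \<in> A" using sx x xA by blast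
    show ?thesis
    proof (cases "y \<in> A")
      case yA: True
      have xyA: "x \<otimes>\<^bsub>G\<^esub> y \<notin> A" using mulA2 yA x xA by blast
      have "f (x \<otimes>\<^bsub>G\<^esub> y) = F \<otimes>\<^bsub>Q\<^esub> \<phi> ((s \<otimes>\<^bsub>G\<^esub> x) \<otimes>\<^bsub>G\<^esub> y)"
        using xyA s x y unfolding f_def by (simp add: G.m_assoc)
      also have "\<dots> = f x \<otimes>\<^bsub>Q\<^esub> f y"
        using phi_m sxA yA xA F phi_c unfolding f_def by (simp add: Q.m_assoc)
      finally show ?thesis .
    next
      case yA: False
      have syA: "s \<otimes>\<^bsub>G\<^esub> y \<in> A" using sx y yA by blast
      have xyA: "x \<otimes>\<^bsub>G\<^esub> y \<in> A" using prod x y xA yA by blast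
      have xx: "inv\<^bsub>G\<^esub> x = x" using invol x xA G.inv_equality by blast
      have e: "inv\<^bsub>G\<^esub> (s \<otimes>\<^bsub>G\<^esub> x) \<otimes>\<^bsub>G\<^esub> (s \<otimes>\<^bsub>G\<^esub> y) = x \<otimes>\<^bsub>G\<^esub> y"
      proof -
        have "inv\<^bsub>G\<^esub> (s \<otimes>\<^bsub>G\<^esub> x) \<otimes>\<^bsub>G\<^esub> (s \<otimes>\<^bsub>G\<^esub> y)
              = inv\<^bsub>G\<^esub> x \<otimes>\<^bsub>G\<^esub> (inv\<^bsub>G\<^esub> s \<otimes>\<^bsub>G\<^esub> s) \<otimes>\<^bsub>G\<^esub> y"
          using s x y by (simp add: G.inv_mult_group G.m_assoc) (simp add: G.m_assoc[symmetric])
        then show ?thesis using xx s x y by simp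
      qed
      have "f x \<otimes>\<^bsub>Q\<^esub> f y = (F \<otimes>\<^bsub>Q\<^esub> \<phi> (s \<otimes>\<^bsub>G\<^esub> x)) \<otimes>\<^bsub>Q\<^esub> (F \<otimes>\<^bsub>Q\<^esub> \<phi> (s \<otimes>\<^bsub>G\<^esub> y))"
        using xA yA unfolding f_def by simp
      also have "\<dots> = (\<phi> (inv\<^bsub>G\<^esub> (s \<otimes>\<^bsub>G\<^esub> x)) \<otimes>\<^bsub>Q\<^esub> F) \<otimes>\<^bsub>Q\<^esub> (F \<otimes>\<^bsub>Q\<^esub> \<phi> (s \<otimes>\<^bsub>G\<^esub> y))"
        using phi_F sxA by auto
      also have "\<dots> = \<phi> (inv\<^bsub>G\<^esub> (s \<otimes>\<^bsub>G\<^esub> x)) \<otimes>\<^bsub>Q\<^esub> (F \<otimes>\<^bsub>Q\<^esub> F) \<otimes>\<^bsub>Q\<^esub> \<phi> (s \<otimes>\<^bsub>G\<^esub> y)"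
        using F phi_c sxA syA Ainv by (simp add: Q.m_assoc) (simp add: Q.m_assoc[symmetric])
      also have "\<dots> = \<phi> (inv\<^bsub>G\<^esub> (s \<otimes>\<^bsub>G\<^esub> x)) \<otimes>\<^bsub>Q\<^esub> \<phi> (s \<otimes>\<^bsub>G\<^esub> y)"
        using F phi_c sxA syA Ainv by simp
      also have "\<dots> = \<phi> (x \<otimes>\<^bsub>G\<^esub> y)" 
      proof -
        have pm: "\<phi> (inv\<^bsub>G\<^esub> (s \<otimes>\<^bsub>G\<^esub> x) \<otimes>\<^bsub>G\<^esub> (s \<otimes>\<^bsub>G\<^esub> y)) = \<phi> (inv\<^bsub>G\<^esub> (s \<otimes>\<^bsub>G\<^esub> x)) \<otimes>\<^bsub>Q\<^esub> \<phi> (s \<otimes>\<^bsub>G\<^esub> y)"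
          using phi_m Ainv[OF sxA] syA by blast
        show ?thesis by (rule sym[OF pm[unfolded e]])
      qed
      also have "\<dots> = f (x \<otimes>\<^bsub>G\<^esub> y)" using xyA unfolding f_def by simp
      finally show ?thesis by simp
    qed
  qed
  have Fin: False if a: "a \<in> A" and b: "b \<in> A" and e: "\<phi> a = F \<otimes>\<^bsub>Q\<^esub> \<phi> b" for a b
  proof -
    have "\<phi> a \<otimes>\<^bsub>Q\<^esub> \<phi> (inv\<^bsub>G\<^esub> b) = F \<otimes>\<^bsub>Q\<^esub> (\<phi> b \<otimes>\<^bsub>Q\<^esub> inv\<^bsub>Q\<^esub> \<phi> b)"
      using e phi_inv b F phi_c by (simp add: Q.m_assoc)
    then have "\<phi> (a \<otimes>\<^bsub>G\<^esub> inv\<^bsub>G\<^esub> b) = F" using phi_m a b Ainv F phi_c by simp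
    moreover have "a \<otimes>\<^bsub>G\<^esub> inv\<^bsub>G\<^esub> b \<in> A" using Amul a b Ainv by blast
    ultimately show False using F_not by blast
  qed
  have finj: "inj_on f (carrier G)"
  proof (rule inj_onI)
    fix x y assume x: "x \<in> carrier G" and y: "y \<in> carrier G" and e: "f x = f y"
    show "x = y"
    proof (cases "x \<in> A"; cases "y \<in> A")
      assume "x \<in> A" "y \<in> A" then show ?thesis using e phi_inj unfolding f_def inj_on_def by auto
    next
      assume "x \<in> A" "y \<notin> A" then show ?thesis using e Fin sx y unfolding f_def by auto
    next
      assume xA: "x \<notin> A" and yA: "y \<in> A"
      then have "\<phi> y = F \<otimes>\<^bsub>Q\<^esub> \<phi> (s \<otimes>\<^bsub>G\<^esub> x)" using e unfolding f_def by simp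
      then show ?thesis using Fin[OF yA sx[OF x xA]] by blast
    next
      assume xA: "x \<notin> A" and yA: "y \<notin> A"
      then have "\<phi> (s \<otimes>\<^bsub>G\<^esub> x) = \<phi> (s \<otimes>\<^bsub>G\<^esub> y)"
        using e F phi_c sx x y Q.l_cancel unfolding f_def by auto
      then have "s \<otimes>\<^bsub>G\<^esub> x = s \<otimes>\<^bsub>G\<^esub> y" using phi_inj sx x y xA yA unfolding inj_on_def by blast
      then show ?thesis using G.l_cancel s x y by blast
    qed
  qed
  have fsurj: "f ` carrier G = carrier Q"
  proof
    show "f ` carrier G \<subseteq> carrier Q" using fc by auto
    show "carrier Q \<subseteq> f ` carrier G"
    proof
      fix q assume "q \<in> carrier Q"
      then have "q \<in> \<phi> ` A \<or> q \<in> (\<lambda>p. F \<otimes>\<^bsub>Q\<^esub> p) ` \<phi> ` A" using surj by auto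
      then show "q \<in> f ` carrier G"
      proof
        assume "q \<in> \<phi> ` A"
        then obtain a where "a \<in> A" "q = \<phi> a" by auto
        then show ?thesis unfolding f_def using Asub by (auto intro!: image_eqI[where x=a])
      next
        assume "q \<in> (\<lambda>p. F \<otimes>\<^bsub>Q\<^esub> p) ` \<phi> ` A"
        then obtain a where a: "a \<in> A" "q = F \<otimes>\<^bsub>Q\<^esub> \<phi> a" by auto
        have ac: "a \<in> carrier G" using a Asub by auto
        have nA: "s \<otimes>\<^bsub>G\<^esub> a \<notin> A" using mulA2 a s by blast
        have "s \<otimes>\<^bsub>G\<^esub> (s \<otimes>\<^bsub>G\<^esub> a) = a" using ss s ac by (simp add: G.m_assoc[symmetric])
        then have "f (s \<otimes>\<^bsub>G\<^esub> a) = q" using nA a unfolding f_def by simp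
        moreover have "s \<otimes>\<^bsub>G\<^esub> a \<in> carrier G" using s ac by simp
        ultimately show ?thesis by blast
      qed
    qed
  qed
  have "f \<in> hom G Q"
    by (rule homI) (rule fc, assumption, rule fm)
  then have "f \<in> iso G Q"
    using finj fsurj by (simp add: iso_iff)
  then show ?thesis by (rule is_isoI)
qed



lemma set_mult_upd: "set_mult (G\<lparr>carrier := K\<rparr>) = set_mult G"
  by (intro ext) (simp add: set_mult_def)

lemma r_coset_upd: "r_coset (G\<lparr>carrier := K\<rparr>) = r_coset G"
  by (intro ext) (simp add: r_coset_def)

theorem lemma6:
  fixes G1 :: "('a, 'c) monoid_scheme" and G2 :: "('b, 'd) monoid_scheme"
  assumes "group G1" and "group G2"
    and "finite (carrier G1)" and "finite (carrier G2)"
    and "sq_cond G1" and "sq_cond G2"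
    and "\<forall>H N. subgroup H G2 \<and> normal N (G2\<lparr>carrier := H\<rparr>)
              \<and> comm_group ((G2\<lparr>carrier := H\<rparr>) Mod N)
              \<longrightarrow> iso_to_section ((G2\<lparr>carrier := H\<rparr>) Mod N) G1"
    and "\<not> comm_group G1"
  shows "iso_to_section G2 G1"
proof (cases "comm_group G2")
  case True
  interpret G2: group G2 by fact
  have n1: "{\<one>\<^bsub>G2\<^esub>} \<lhd> G2"
    unfolding G2.normal_inv_iff using G2.triv_subgroup by simp
  have c1: "comm_group (G2 Mod {\<one>\<^bsub>G2\<^esub>})"
    by (rule comm_group.abelian_FactGroup[OF True G2.triv_subgroup])
  have eqG2: "G2\<lparr>carrier := carrier G2\<rparr> = G2" by simp
  have "iso_to_section (G2 Mod {\<one>\<^bsub>G2\<^esub>}) G1"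
    using assms(7)[rule_format, of "carrier G2" "{\<one>\<^bsub>G2\<^esub>}"] G2.subgroup_self n1 c1
    unfolding eqG2 by blast
  then obtain H N where HN: "subgroup H G1" "N \<lhd> G1\<lparr>carrier := H\<rparr>"
    "G2 Mod {\<one>\<^bsub>G2\<^esub>} \<cong> G1\<lparr>carrier := H\<rparr> Mod N"
    unfolding iso_to_section_def by blast
  have "G2 \<cong> G2 Mod {\<one>\<^bsub>G2\<^esub>}"
    by (rule group.iso_sym[OF normal.factorgroup_is_group[OF n1] is_isoI[OF G2.trivial_factor_iso]])
  then have "G2 \<cong> G1\<lparr>carrier := H\<rparr> Mod N" using HN(3) by (rule iso_trans)
  then show ?thesis unfolding iso_to_section_def using HN(1,2) by blast
next
  case False
  interpret G1: group G1 by fact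
  interpret G2: group G2 by fact
  obtain A2 where A2: "subgroup A2 G2" "\<forall>a\<in>A2. \<forall>b\<in>A2. a \<otimes>\<^bsub>G2\<^esub> b = b \<otimes>\<^bsub>G2\<^esub> a"
    "\<exists>x\<in>A2. x \<otimes>\<^bsub>G2\<^esub> x \<noteq> \<one>\<^bsub>G2\<^esub>"
    "\<forall>x\<in>carrier G2 - A2. x \<otimes>\<^bsub>G2\<^esub> x = \<one>\<^bsub>G2\<^esub>"
    "\<forall>x\<in>carrier G2 - A2. \<forall>a\<in>A2. x \<otimes>\<^bsub>G2\<^esub> a \<otimes>\<^bsub>G2\<^esub> x = inv\<^bsub>G2\<^esub> a"
    "\<forall>x\<in>carrier G2 - A2. \<forall>y\<in>carrier G2 - A2. x \<otimes>\<^bsub>G2\<^esub> y \<in> A2"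
    "carrier G2 - A2 \<noteq> {}"
    by (rule dih_struct[OF assms(2) assms(6) False])
  obtain A1 where A1: "subgroup A1 G1" "\<forall>a\<in>A1. \<forall>b\<in>A1. a \<otimes>\<^bsub>G1\<^esub> b = b \<otimes>\<^bsub>G1\<^esub> a"
    "\<exists>x\<in>A1. x \<otimes>\<^bsub>G1\<^esub> x \<noteq> \<one>\<^bsub>G1\<^esub>"
    "\<forall>x\<in>carrier G1 - A1. x \<otimes>\<^bsub>G1\<^esub> x = \<one>\<^bsub>G1\<^esub>"
    "\<forall>x\<in>carrier G1 - A1. \<forall>a\<in>A1. x \<otimes>\<^bsub>G1\<^esub> a \<otimes>\<^bsub>G1\<^esub> x = inv\<^bsub>G1\<^esub> a"
    "\<forall>x\<in>carrier G1 - A1. \<forall>y\<in>carrier G1 - A1. x \<otimes>\<^bsub>G1\<^esub> y \<in> A1"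
    "carrier G1 - A1 \<noteq> {}"
    by (rule dih_struct[OF assms(1) assms(5) assms(8)])
  obtain s where s: "s \<in> carrier G2" "s \<notin> A2" using A2(7) by blast
  obtain t where t: "t \<in> carrier G1" "t \<notin> A1" using A1(7) by blast
  obtain x2 where x2: "x2 \<in> A2" "x2 \<otimes>\<^bsub>G2\<^esub> x2 \<noteq> \<one>\<^bsub>G2\<^esub>" using A2(3) by blast
  have A2c: "A2 \<subseteq> carrier G2" by (rule subgroup.subset[OF A2(1)])
  have A1c: "A1 \<subseteq> carrier G1" by (rule subgroup.subset[OF A1(1)])
  define G2A where "G2A = G2\<lparr>carrier := A2\<rparr>"
  have gA: "group G2A" unfolding G2A_def by (rule G2.subgroup_imp_group[OF A2(1)])
  interpret GA: group G2A by (rule gA)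
  have cA: "comm_group G2A"
    apply (rule GA.group_comm_groupI)
    using A2(2) unfolding G2A_def by simp
  have nA: "{\<one>\<^bsub>G2A\<^esub>} \<lhd> G2A"
    unfolding GA.normal_inv_iff using GA.triv_subgroup by simp
  have cAq: "comm_group (G2A Mod {\<one>\<^bsub>G2A\<^esub>})"
    by (rule comm_group.abelian_FactGroup[OF cA GA.triv_subgroup])
  have "iso_to_section (G2A Mod {\<one>\<^bsub>G2A\<^esub>}) G1"
    using assms(7)[rule_format, of A2 "{\<one>\<^bsub>G2A\<^esub>}"] A2(1) nA cAq
    unfolding G2A_def by blast
  then obtain H1 N1 where HN: "subgroup H1 G1" "N1 \<lhd> G1\<lparr>carrier := H1\<rparr>"
    "G2A Mod {\<one>\<^bsub>G2A\<^esub>} \<cong> G1\<lparr>carrier := H1\<rparr> Mod N1"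
    unfolding iso_to_section_def by blast
  define P where "P = G1\<lparr>carrier := H1\<rparr> Mod N1"
  have "G2A \<cong> G2A Mod {\<one>\<^bsub>G2A\<^esub>}"
    by (rule group.iso_sym[OF normal.factorgroup_is_group[OF nA] is_isoI[OF GA.trivial_factor_iso]])
  then have "G2A \<cong> P" unfolding P_def using HN(3) by (rule iso_trans)
  then obtain \<phi> where phi: "\<phi> \<in> iso G2A P" unfolding is_iso_def by blast
  interpret N1: normal N1 "G1\<lparr>carrier := H1\<rparr>" by (rule HN(2))
  have gP: "group P" unfolding P_def by (rule N1.factorgroup_is_group)
  have G1H1: "group (G1\<lparr>carrier := H1\<rparr>)" by (rule G1.subgroup_imp_group[OF HN(1)])
  have H1c: "H1 \<subseteq> carrier G1" by (rule subgroup.subset[OF HN(1)])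
  define \<pi> where "\<pi> = (\<lambda>h. N1 #>\<^bsub>G1\<^esub> h)"
  have piP: "\<pi> \<in> hom (G1\<lparr>carrier := H1\<rparr>) P"
    unfolding \<pi>_def P_def using N1.r_coset_hom_Mod by (simp add: r_coset_upd)
  have carP: "carrier P = \<pi> ` H1"
    unfolding P_def \<pi>_def by (simp add: carrier_FactGroup r_coset_upd)
  have ghP: "group_hom (G1\<lparr>carrier := H1\<rparr>) P \<pi>"
    unfolding group_hom_def group_hom_axioms_def using G1H1 gP piP by blast
  have phihom: "\<phi> \<in> hom G2A P" using phi by (simp add: iso_iff)
  have ghphi: "group_hom G2A P \<phi>"
    unfolding group_hom_def group_hom_axioms_def using gA gP phihom by blast
  have phi_surj: "\<phi> ` A2 = carrier P" using phi unfolding iso_iff G2A_def by simp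
  have phi_inj: "inj_on \<phi> A2" using phi unfolding iso_iff G2A_def by simp
  have phi_c: "\<And>a. a \<in> A2 \<Longrightarrow> \<phi> a \<in> carrier P" using phi_surj by blast
  have phi_m: "\<And>a b. a \<in> A2 \<Longrightarrow> b \<in> A2 \<Longrightarrow> \<phi> (a \<otimes>\<^bsub>G2\<^esub> b) = \<phi> a \<otimes>\<^bsub>P\<^esub> \<phi> b"
    using hom_mult[OF phihom] unfolding G2A_def by simp
  have phi_one: "\<phi> \<one>\<^bsub>G2\<^esub> = \<one>\<^bsub>P\<^esub>"
    using hom_one[OF phihom gA gP] unfolding G2A_def by simp
  have pi_m: "\<And>h k. h \<in> H1 \<Longrightarrow> k \<in> H1 \<Longrightarrow> \<pi> (h \<otimes>\<^bsub>G1\<^esub> k) = \<pi> h \<otimes>\<^bsub>P\<^esub> \<pi> k"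
    using hom_mult[OF piP] by simp
  have pi_one: "\<pi> \<one>\<^bsub>G1\<^esub> = \<one>\<^bsub>P\<^esub>"
    using hom_one[OF piP G1H1 gP] by simp
  have pi_c: "\<And>h. h \<in> H1 \<Longrightarrow> \<pi> h \<in> carrier P" using carP by blast
  interpret P: group P by (rule gP)
  have H1A1: "H1 \<subseteq> A1"
  proof (rule ccontr)
    assume "\<not> H1 \<subseteq> A1"
    then obtain h0 where h0: "h0 \<in> H1" "h0 \<notin> A1" by blast
    have h0c: "h0 \<in> carrier G1" using h0 H1c by blast
    have Pcomm: "p \<otimes>\<^bsub>P\<^esub> q = q \<otimes>\<^bsub>P\<^esub> p" if p: "p \<in> carrier P" and q: "q \<in> carrier P" for p q
    proof -
      obtain a where a: "a \<in> A2" "p = \<phi> a" using p phi_surj by blast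
      obtain b where b: "b \<in> A2" "q = \<phi> b" using q phi_surj by blast
      have "\<phi> a \<otimes>\<^bsub>P\<^esub> \<phi> b = \<phi> (a \<otimes>\<^bsub>G2\<^esub> b)" using phi_m a b by simp
      also have "\<dots> = \<phi> (b \<otimes>\<^bsub>G2\<^esub> a)" using A2(2) a b by simp
      also have "\<dots> = \<phi> b \<otimes>\<^bsub>P\<^esub> \<phi> a" using phi_m a b by simp
      finally show ?thesis using a b by simp
    qed
    have u: "\<pi> h0 \<otimes>\<^bsub>P\<^esub> \<pi> h0 = \<one>\<^bsub>P\<^esub>"
    proof -
      have "h0 \<otimes>\<^bsub>G1\<^esub> h0 = \<one>\<^bsub>G1\<^esub>" using A1(4) h0c h0 by blast
      then show ?thesis using pi_m[OF h0(1) h0(1)] pi_one by simp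
    qed
    have sq1: "\<pi> h \<otimes>\<^bsub>P\<^esub> \<pi> h = \<one>\<^bsub>P\<^esub>" if h: "h \<in> H1" for h
    proof (cases "h \<in> A1")
      case True
      have hc: "h \<in> carrier G1" using h H1c by blast
      have nA: "h0 \<otimes>\<^bsub>G1\<^esub> h \<notin> A1"
      proof
        assume "h0 \<otimes>\<^bsub>G1\<^esub> h \<in> A1"
        then have "(h0 \<otimes>\<^bsub>G1\<^esub> h) \<otimes>\<^bsub>G1\<^esub> inv\<^bsub>G1\<^esub> h \<in> A1"
          using True subgroup.m_closed[OF A1(1)] subgroup.m_inv_closed[OF A1(1)] by blast
        then show False using h0 h0c hc by (simp add: G1.m_assoc)
      qed
      have hh: "(h0 \<otimes>\<^bsub>G1\<^esub> h) \<otimes>\<^bsub>G1\<^esub> (h0 \<otimes>\<^bsub>G1\<^esub> h) = \<one>\<^bsub>G1\<^esub>"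
        using A1(4) nA h0c hc by simp
      have h0h: "h0 \<otimes>\<^bsub>G1\<^esub> h \<in> H1" using subgroup.m_closed[OF HN(1) h0(1) h] .
      have "\<pi> (h0 \<otimes>\<^bsub>G1\<^esub> h) \<otimes>\<^bsub>P\<^esub> \<pi> (h0 \<otimes>\<^bsub>G1\<^esub> h) = \<one>\<^bsub>P\<^esub>"
        using pi_m[OF h0h h0h] hh pi_one by simp
      then have e: "(\<pi> h0 \<otimes>\<^bsub>P\<^esub> \<pi> h) \<otimes>\<^bsub>P\<^esub> (\<pi> h0 \<otimes>\<^bsub>P\<^esub> \<pi> h) = \<one>\<^bsub>P\<^esub>"
        using pi_m[OF h0(1) h] by simp
      have uc: "\<pi> h0 \<in> carrier P" "\<pi> h \<in> carrier P" using pi_c h0 h by auto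
      have "(\<pi> h0 \<otimes>\<^bsub>P\<^esub> \<pi> h) \<otimes>\<^bsub>P\<^esub> (\<pi> h0 \<otimes>\<^bsub>P\<^esub> \<pi> h)
          = \<pi> h0 \<otimes>\<^bsub>P\<^esub> (\<pi> h \<otimes>\<^bsub>P\<^esub> \<pi> h0) \<otimes>\<^bsub>P\<^esub> \<pi> h"
        using uc by (simp add: P.m_assoc)
      also have "\<dots> = \<pi> h0 \<otimes>\<^bsub>P\<^esub> (\<pi> h0 \<otimes>\<^bsub>P\<^esub> \<pi> h) \<otimes>\<^bsub>P\<^esub> \<pi> h"
        using Pcomm uc by simp
      also have "\<dots> = (\<pi> h0 \<otimes>\<^bsub>P\<^esub> \<pi> h0) \<otimes>\<^bsub>P\<^esub> (\<pi> h \<otimes>\<^bsub>P\<^esub> \<pi> h)"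
        using uc by (simp add: P.m_assoc)
      also have "\<dots> = \<pi> h \<otimes>\<^bsub>P\<^esub> \<pi> h"
        using u uc by simp
      finally show ?thesis using e by simp
    next
      case False
      have hc: "h \<in> carrier G1" using h H1c by blast
      have "h \<otimes>\<^bsub>G1\<^esub> h = \<one>\<^bsub>G1\<^esub>" using A1(4) hc False by blast
      then show ?thesis using pi_m[OF h h] pi_one by simp
    qed
    obtain h where h: "h \<in> H1" "\<phi> x2 = \<pi> h" using phi_c[OF x2(1)] carP by blast
    have "\<phi> (x2 \<otimes>\<^bsub>G2\<^esub> x2) = \<phi> \<one>\<^bsub>G2\<^esub>"
      using phi_m[OF x2(1) x2(1)] h sq1[OF h(1)] phi_one by simp
    moreover have "x2 \<otimes>\<^bsub>G2\<^esub> x2 \<in> A2" using subgroup.m_closed[OF A2(1) x2(1) x2(1)] .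
    moreover have "\<one>\<^bsub>G2\<^esub> \<in> A2" by (rule subgroup.one_closed[OF A2(1)])
    ultimately have "x2 \<otimes>\<^bsub>G2\<^esub> x2 = \<one>\<^bsub>G2\<^esub>" using phi_inj unfolding inj_on_def by blast
    then show False using x2(2) by blast
  qed
  have tt: "t \<otimes>\<^bsub>G1\<^esub> t = \<one>\<^bsub>G1\<^esub>" using A1(4) t by blast
  have tinvt: "inv\<^bsub>G1\<^esub> t = t" using G1.inv_equality[OF tt t(1) t(1)] .
  have tinv: "t \<otimes>\<^bsub>G1\<^esub> h \<otimes>\<^bsub>G1\<^esub> t = inv\<^bsub>G1\<^esub> h" if h: "h \<in> H1" for h
    using A1(5) t h H1A1 by blast
  have th: "t \<otimes>\<^bsub>G1\<^esub> h = inv\<^bsub>G1\<^esub> h \<otimes>\<^bsub>G1\<^esub> t" if h: "h \<in> H1" for h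
  proof -
    have hc: "h \<in> carrier G1" using h H1c by blast
    have "t \<otimes>\<^bsub>G1\<^esub> h = t \<otimes>\<^bsub>G1\<^esub> h \<otimes>\<^bsub>G1\<^esub> (t \<otimes>\<^bsub>G1\<^esub> t)" using tt hc t by simp
    also have "\<dots> = (t \<otimes>\<^bsub>G1\<^esub> h \<otimes>\<^bsub>G1\<^esub> t) \<otimes>\<^bsub>G1\<^esub> t" using hc t by (simp add: G1.m_assoc)
    also have "\<dots> = inv\<^bsub>G1\<^esub> h \<otimes>\<^bsub>G1\<^esub> t" using tinv[OF h] by simp
    finally show ?thesis .
  qed
  have H1inv: "\<And>h. h \<in> H1 \<Longrightarrow> inv\<^bsub>G1\<^esub> h \<in> H1" by (rule subgroup.m_inv_closed[OF HN(1)])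
  have H1mul: "\<And>h k. h \<in> H1 \<Longrightarrow> k \<in> H1 \<Longrightarrow> h \<otimes>\<^bsub>G1\<^esub> k \<in> H1" by (rule subgroup.m_closed[OF HN(1)])
  have H11: "\<one>\<^bsub>G1\<^esub> \<in> H1" by (rule subgroup.one_closed[OF HN(1)])
  have invtk: "inv\<^bsub>G1\<^esub> (t \<otimes>\<^bsub>G1\<^esub> k) = t \<otimes>\<^bsub>G1\<^esub> k" if k: "k \<in> H1" for k
  proof -
    have kc: "k \<in> carrier G1" using k H1c by blast
    have "inv\<^bsub>G1\<^esub> (t \<otimes>\<^bsub>G1\<^esub> k) = inv\<^bsub>G1\<^esub> k \<otimes>\<^bsub>G1\<^esub> t"
      using G1.inv_mult_group[OF t(1) kc] tinvt by simp
    then show ?thesis using th[OF k] by simp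
  qed
  define H where "H = H1 \<union> (\<lambda>h. t \<otimes>\<^bsub>G1\<^esub> h) ` H1"
  have subH: "subgroup H G1"
  proof (rule G1.subgroupI)
    show "H \<subseteq> carrier G1" unfolding H_def using H1c t by auto
    show "H \<noteq> {}" unfolding H_def using H11 by blast
  next
    fix a assume a: "a \<in> H"
    show "inv\<^bsub>G1\<^esub> a \<in> H"
    proof (cases "a \<in> H1")
      case True then show ?thesis using H1inv unfolding H_def by blast
    next
      case False
      then obtain k where k: "k \<in> H1" "a = t \<otimes>\<^bsub>G1\<^esub> k" using a unfolding H_def by blast
      then show ?thesis using invtk[OF k(1)] unfolding H_def by blast
    qed
  next
    fix a b assume a: "a \<in> H" and b: "b \<in> H"
    show "a \<otimes>\<^bsub>G1\<^esub> b \<in> H"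
    proof (cases "a \<in> H1"; cases "b \<in> H1")
      assume "a \<in> H1" "b \<in> H1" then show ?thesis using H1mul unfolding H_def by blast
    next
      assume aH: "a \<in> H1" and "b \<notin> H1"
      then obtain k where k: "k \<in> H1" "b = t \<otimes>\<^bsub>G1\<^esub> k" using b unfolding H_def by blast
      have ac: "a \<in> carrier G1" "k \<in> carrier G1" using aH k H1c by auto
      have "t \<otimes>\<^bsub>G1\<^esub> inv\<^bsub>G1\<^esub> a = a \<otimes>\<^bsub>G1\<^esub> t" using th[OF H1inv[OF aH]] ac by simp
      then have "a \<otimes>\<^bsub>G1\<^esub> b = t \<otimes>\<^bsub>G1\<^esub> (inv\<^bsub>G1\<^esub> a \<otimes>\<^bsub>G1\<^esub> k)"
        using k ac t by (simp add: G1.m_assoc[symmetric])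
      then show ?thesis using H1mul[OF H1inv[OF aH] k(1)] unfolding H_def by blast
    next
      assume "a \<notin> H1" and bH: "b \<in> H1"
      then obtain k where k: "k \<in> H1" "a = t \<otimes>\<^bsub>G1\<^esub> k" using a unfolding H_def by blast
      have bc: "b \<in> carrier G1" "k \<in> carrier G1" using bH k H1c by auto
      have "a \<otimes>\<^bsub>G1\<^esub> b = t \<otimes>\<^bsub>G1\<^esub> (k \<otimes>\<^bsub>G1\<^esub> b)" using k bc t by (simp add: G1.m_assoc)
      then show ?thesis using H1mul[OF k(1) bH] unfolding H_def by blast
    next
      assume "a \<notin> H1" and "b \<notin> H1"
      then obtain k l where k: "k \<in> H1" "a = t \<otimes>\<^bsub>G1\<^esub> k" and l: "l \<in> H1" "b = t \<otimes>\<^bsub>G1\<^esub> l"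
        using a b unfolding H_def by blast
      have kc: "k \<in> carrier G1" "l \<in> carrier G1" using k l H1c by auto
      have "a \<otimes>\<^bsub>G1\<^esub> b = (t \<otimes>\<^bsub>G1\<^esub> k \<otimes>\<^bsub>G1\<^esub> t) \<otimes>\<^bsub>G1\<^esub> l" using k l kc t by (simp add: G1.m_assoc)
      also have "\<dots> = inv\<^bsub>G1\<^esub> k \<otimes>\<^bsub>G1\<^esub> l" using tinv[OF k(1)] by simp
      finally show ?thesis using H1mul[OF H1inv[OF k(1)] l(1)] unfolding H_def by simp
    qed
  qed
  have H1H: "H1 \<subseteq> H" unfolding H_def by blast
  have tH: "t \<in> H" unfolding H_def using H11 t by force
  have N1sub: "subgroup N1 G1" by (rule G1.incl_subgroup[OF HN(1) N1.subgroup_axioms])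
  have N1H1: "N1 \<subseteq> H1" using N1.subset by simp
  have N1inv: "\<And>n. n \<in> N1 \<Longrightarrow> inv\<^bsub>G1\<^esub> n \<in> N1" by (rule subgroup.m_inv_closed[OF N1sub])
  have N11: "\<one>\<^bsub>G1\<^esub> \<in> N1" by (rule subgroup.one_closed[OF N1sub])
  have N1conj: "h \<otimes>\<^bsub>G1\<^esub> n \<otimes>\<^bsub>G1\<^esub> inv\<^bsub>G1\<^esub> h \<in> N1" if h: "h \<in> H1" and n: "n \<in> N1" for h n
    using N1.inv_op_closed2[of h n] h n G1.m_inv_consistent[OF HN(1) h] by simp
  have gH: "group (G1\<lparr>carrier := H\<rparr>)" by (rule G1.subgroup_imp_group[OF subH])
  interpret GH: group "G1\<lparr>carrier := H\<rparr>" by (rule gH)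
  have nH: "N1 \<lhd> G1\<lparr>carrier := H\<rparr>"
    unfolding GH.normal_inv_iff
  proof (intro conjI ballI)
    show "subgroup N1 (G1\<lparr>carrier := H\<rparr>)"
      by (rule G1.subgroup_incl[OF N1sub subH]) (use N1H1 H1H in blast)
  next
    fix x n assume x: "x \<in> carrier (G1\<lparr>carrier := H\<rparr>)" and n: "n \<in> N1"
    have xH: "x \<in> H" using x by simp
    have e: "inv\<^bsub>G1\<lparr>carrier := H\<rparr>\<^esub> x = inv\<^bsub>G1\<^esub> x" by (rule G1.m_inv_consistent[OF subH xH])
    show "x \<otimes>\<^bsub>G1\<lparr>carrier := H\<rparr>\<^esub> n \<otimes>\<^bsub>G1\<lparr>carrier := H\<rparr>\<^esub> inv\<^bsub>G1\<lparr>carrier := H\<rparr>\<^esub> x \<in> N1"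
      unfolding e
    proof (cases "x \<in> H1")
      case True
      then show "x \<otimes>\<^bsub>G1\<lparr>carrier := H\<rparr>\<^esub> n \<otimes>\<^bsub>G1\<lparr>carrier := H\<rparr>\<^esub> inv\<^bsub>G1\<^esub> x \<in> N1"
        using N1conj[OF True n] by simp
    next
      case False
      then obtain k where k: "k \<in> H1" "x = t \<otimes>\<^bsub>G1\<^esub> k" using xH unfolding H_def by blast
      have kc: "k \<in> carrier G1" using k H1c by blast
      have nc: "n \<in> carrier G1" using n N1H1 H1c by blast
      have m: "k \<otimes>\<^bsub>G1\<^esub> n \<otimes>\<^bsub>G1\<^esub> inv\<^bsub>G1\<^esub> k \<in> N1" by (rule N1conj[OF k(1) n])
      have mH: "k \<otimes>\<^bsub>G1\<^esub> n \<otimes>\<^bsub>G1\<^esub> inv\<^bsub>G1\<^esub> k \<in> H1" using m N1H1 by blast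
      have "x \<otimes>\<^bsub>G1\<^esub> n \<otimes>\<^bsub>G1\<^esub> inv\<^bsub>G1\<^esub> x = (t \<otimes>\<^bsub>G1\<^esub> k) \<otimes>\<^bsub>G1\<^esub> n \<otimes>\<^bsub>G1\<^esub> (inv\<^bsub>G1\<^esub> k \<otimes>\<^bsub>G1\<^esub> t)"
        using invtk[OF k(1)] th[OF k(1)] k(2) by simp
      also have "\<dots> = t \<otimes>\<^bsub>G1\<^esub> (k \<otimes>\<^bsub>G1\<^esub> n \<otimes>\<^bsub>G1\<^esub> inv\<^bsub>G1\<^esub> k) \<otimes>\<^bsub>G1\<^esub> t"
        using kc nc t by (simp add: G1.m_assoc)
      also have "\<dots> = inv\<^bsub>G1\<^esub> (k \<otimes>\<^bsub>G1\<^esub> n \<otimes>\<^bsub>G1\<^esub> inv\<^bsub>G1\<^esub> k)" by (rule tinv[OF mH])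
      finally have "x \<otimes>\<^bsub>G1\<^esub> n \<otimes>\<^bsub>G1\<^esub> inv\<^bsub>G1\<^esub> x \<in> N1" using N1inv[OF m] by simp
      then show "x \<otimes>\<^bsub>G1\<lparr>carrier := H\<rparr>\<^esub> n \<otimes>\<^bsub>G1\<lparr>carrier := H\<rparr>\<^esub> inv\<^bsub>G1\<^esub> x \<in> N1" by simp
    qed
  qed
  define Q where "Q = G1\<lparr>carrier := H\<rparr> Mod N1"
  interpret N1H: normal N1 "G1\<lparr>carrier := H\<rparr>" by (rule nH)
  have gQ: "group Q" unfolding Q_def by (rule N1H.factorgroup_is_group)
  interpret Q: group Q by (rule gQ)
  have piQ: "\<pi> \<in> hom (G1\<lparr>carrier := H\<rparr>) Q"
    unfolding \<pi>_def Q_def using N1H.r_coset_hom_Mod by (simp add: r_coset_upd)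
  have carQ: "carrier Q = \<pi> ` H"
    unfolding Q_def \<pi>_def by (simp add: carrier_FactGroup r_coset_upd)
  have ghQ: "group_hom (G1\<lparr>carrier := H\<rparr>) Q \<pi>"
    unfolding group_hom_def group_hom_axioms_def using gH gQ piQ by blast
  have piQ_m: "\<And>h k. h \<in> H \<Longrightarrow> k \<in> H \<Longrightarrow> \<pi> (h \<otimes>\<^bsub>G1\<^esub> k) = \<pi> h \<otimes>\<^bsub>Q\<^esub> \<pi> k"
    using hom_mult[OF piQ] by simp
  have piQ_one: "\<pi> \<one>\<^bsub>G1\<^esub> = \<one>\<^bsub>Q\<^esub>"
    using hom_one[OF piQ gH gQ] by simp
  have multPQ: "\<And>p q. p \<otimes>\<^bsub>P\<^esub> q = p \<otimes>\<^bsub>Q\<^esub> q"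
    unfolding P_def Q_def by (simp add: set_mult_upd)
  have onePQ: "\<one>\<^bsub>P\<^esub> = \<one>\<^bsub>Q\<^esub>" unfolding P_def Q_def by simp
  have carPQ: "carrier P \<subseteq> carrier Q" using carP carQ H1H by blast
  define F where "F = \<pi> t"
  have Fc: "F \<in> carrier Q" unfolding F_def carQ using tH by blast
  have FF: "F \<otimes>\<^bsub>Q\<^esub> F = \<one>\<^bsub>Q\<^esub>" unfolding F_def using piQ_m[OF tH tH] tt piQ_one by simp
  have phi_cQ: "\<forall>a\<in>A2. \<phi> a \<in> carrier Q" using phi_c carPQ by blast
  have phi_mQ: "\<forall>a\<in>A2. \<forall>b\<in>A2. \<phi> (a \<otimes>\<^bsub>G2\<^esub> b) = \<phi> a \<otimes>\<^bsub>Q\<^esub> \<phi> b"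
    using phi_m multPQ by simp
  have phi_F: "\<forall>a\<in>A2. F \<otimes>\<^bsub>Q\<^esub> \<phi> a = \<phi> (inv\<^bsub>G2\<^esub> a) \<otimes>\<^bsub>Q\<^esub> F"
  proof
    fix a assume a: "a \<in> A2"
    obtain h where h: "h \<in> H1" "\<phi> a = \<pi> h" using phi_c[OF a] carP by blast
    have hc: "h \<in> carrier G1" using h H1c by blast
    have aA: "a \<in> carrier G2A" unfolding G2A_def using a by simp
    have "\<phi> (inv\<^bsub>G2\<^esub> a) = \<phi> (inv\<^bsub>G2A\<^esub> a)"
      unfolding G2A_def using G2.m_inv_consistent[OF A2(1) a] by simp
    also have "\<dots> = inv\<^bsub>P\<^esub> (\<phi> a)" using group_hom.hom_inv[OF ghphi aA] .
    also have "\<dots> = inv\<^bsub>P\<^esub> (\<pi> h)" using h by simp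
    also have "\<dots> = \<pi> (inv\<^bsub>G1\<lparr>carrier := H1\<rparr>\<^esub> h)"
      using group_hom.hom_inv[OF ghP, of h] h by simp
    also have "\<dots> = \<pi> (inv\<^bsub>G1\<^esub> h)" using G1.m_inv_consistent[OF HN(1) h(1)] by simp
    finally have pinv: "\<phi> (inv\<^bsub>G2\<^esub> a) = \<pi> (inv\<^bsub>G1\<^esub> h)" .
    have hH: "h \<in> H" "inv\<^bsub>G1\<^esub> h \<in> H" using h H1H H1inv by auto
    have "F \<otimes>\<^bsub>Q\<^esub> \<phi> a = \<pi> (t \<otimes>\<^bsub>G1\<^esub> h)" unfolding F_def using piQ_m[OF tH hH(1)] h by simp
    also have "\<dots> = \<pi> (inv\<^bsub>G1\<^esub> h \<otimes>\<^bsub>G1\<^esub> t)" using th[OF h(1)] by simp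
    also have "\<dots> = \<phi> (inv\<^bsub>G2\<^esub> a) \<otimes>\<^bsub>Q\<^esub> F" unfolding F_def using piQ_m[OF hH(2) tH] pinv by simp
    finally show "F \<otimes>\<^bsub>Q\<^esub> \<phi> a = \<phi> (inv\<^bsub>G2\<^esub> a) \<otimes>\<^bsub>Q\<^esub> F" .
  qed
  have F_not: "F \<notin> \<phi> ` A2"
  proof
    assume "F \<in> \<phi> ` A2"
    then have "F \<in> carrier P" using phi_surj by blast
    then obtain h where h: "h \<in> H1" "\<pi> t = \<pi> h" unfolding F_def carP by blast
    have "t \<in> \<pi> t" unfolding \<pi>_def r_coset_def using N11 t by force
    then have "t \<in> N1 #>\<^bsub>G1\<^esub> h" using h unfolding \<pi>_def by simp
    then obtain n where n: "n \<in> N1" "t = n \<otimes>\<^bsub>G1\<^esub> h" unfolding r_coset_def by blast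
    have "t \<in> H1" using n h H1mul N1H1 by blast
    then show False using H1A1 t by blast
  qed
  have surjQ: "carrier Q \<subseteq> \<phi> ` A2 \<union> (\<lambda>p. F \<otimes>\<^bsub>Q\<^esub> p) ` \<phi> ` A2"
  proof
    fix q assume "q \<in> carrier Q"
    then obtain g where g: "g \<in> H" "q = \<pi> g" unfolding carQ by blast
    show "q \<in> \<phi> ` A2 \<union> (\<lambda>p. F \<otimes>\<^bsub>Q\<^esub> p) ` \<phi> ` A2"
    proof (cases "g \<in> H1")
      case True
      then have "q \<in> carrier P" using g carP by blast
      then show ?thesis using phi_surj by blast
    next
      case False
      then obtain k where k: "k \<in> H1" "g = t \<otimes>\<^bsub>G1\<^esub> k" using g unfolding H_def by blast
      have "q = F \<otimes>\<^bsub>Q\<^esub> \<pi> k" unfolding F_def using g k piQ_m[OF tH] H1H by blast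
      moreover have "\<pi> k \<in> \<phi> ` A2" using k carP phi_surj by blast
      ultimately show ?thesis by blast
    qed
  qed
  have "G2 \<cong> Q"
    by (rule dih_iso[OF assms(2) gQ A2(1) s(1) s(2) A2(4) A2(5) A2(6) Fc FF phi_cQ phi_mQ phi_inj phi_F F_not surjQ])
  then show ?thesis unfolding iso_to_section_def Q_def using subH nH by blast
qed

end
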